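(* Let $(X,d)$ be a metric space, $\emptyset\neq F\subseteq X$, and let $G,H:\mathbb{R}_+\to\mathbb{R}_+$ satisfy property (G) and property (H). Let $(x_n)$ be a sequence in $X$ which is $(G,H)$-Fej\'er monotone w.r.t. $F$. (i) If $\{x_n\mid n\in\mathbb{N}\}$ has an adherent point (a point of its closure) $\hat x\in F$, then $(x_n)$ converges to $\hat x$. (ii) If moreover $H$ has the property that for every sequence $(a_n)$ in $\mathbb{R}_+$ with $(H(a_n))$ bounded, $(a_n)$ is bounded, then $(x_n)$ is bounded.
   Context: $\mathbb{R}_+$ denotes the nonnegative reals. Property (G): for every sequence $(a_n)$ in $\mathbb{R}_+$, $a_n\to 0$ implies $G(a_n)\to0$. Property (H): for every sequence $(a_n)$ in $\mathbb{R}_+$, $H(a_n)\to0$ implies $a_n\to0$. $(x_n)$ is $(G,H)$-Fej\'er monotone w.r.t. $F$ if $H(d(x_{n+m},p))\le G(d(x_n,p))$ for all $n,m\in\mathbb{N}$ and all $p\in F$. *)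

theory Defs
  imports "HOL-Analysis.Analysis"
begin

text \<open>Functions R+ -> R+ are modelled as real => real mapping nonnegatives to nonnegatives.\<close>

definition nonneg_map :: "(real \<Rightarrow> real) \<Rightarrow> bool" where
  "nonneg_map G \<longleftrightarrow> (\<forall>t\<ge>0. G t \<ge> 0)"

definition property_G :: "(real \<Rightarrow> real) \<Rightarrow> bool" where
  "property_G G \<longleftrightarrow>
     (\<forall>a :: nat \<Rightarrow> real. (\<forall>n. a n \<ge> 0) \<longrightarrow> a \<longlonglongrightarrow> 0 \<longrightarrow> (\<lambda>n. G (a n)) \<longlonglongrightarrow> 0)"

definition property_H :: "(real \<Rightarrow> real) \<Rightarrow> bool" where
  "property_H H \<longleftrightarrow>
     (\<forall>a :: nat \<Rightarrow> real. (\<forall>n. a n \<ge> 0) \<longrightarrow> (\<lambda>n. H (a n)) \<longlonglongrightarrow> 0 \<longrightarrow> a \<longlonglongrightarrow> 0)"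

definition GH_fejer_monotone ::
  "(real \<Rightarrow> real) \<Rightarrow> (real \<Rightarrow> real) \<Rightarrow> 'a::metric_space set \<Rightarrow> (nat \<Rightarrow> 'a) \<Rightarrow> bool" where
  "GH_fejer_monotone G H F x \<longleftrightarrow>
     (\<forall>n m. \<forall>p\<in>F. H (dist (x (n + m)) p) \<le> G (dist (x n) p))"

definition bounded_preimage_prop :: "(real \<Rightarrow> real) \<Rightarrow> bool" where
  "bounded_preimage_prop H \<longleftrightarrow>
     (\<forall>a :: nat \<Rightarrow> real. (\<forall>n. a n \<ge> 0) \<longrightarrow> bounded (range (\<lambda>n. H (a n))) \<longrightarrow> bounded (range a))"

end

theory Submission
  imports Defs
begin

lemma G_small:
  assumes "property_G G" "(\<delta>::real) > 0"
  shows "\<exists>\<eta>>0. \<forall>t. 0 \<le> t \<and> t < \<eta> \<longrightarrow> \<bar>G t\<bar> < \<delta>"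
proof (rule ccontr)
  assume "\<not> ?thesis"
  hence "\<forall>j::nat. \<exists>t. 0 \<le> t \<and> t < 1 / real (Suc j) \<and> \<bar>G t\<bar> \<ge> \<delta>"
    by (metis not_le of_nat_0_less_iff zero_less_Suc zero_less_divide_1_iff)
  then obtain t where t: "\<And>j. 0 \<le> t j \<and> t j < 1 / real (Suc j) \<and> \<bar>G (t j)\<bar> \<ge> \<delta>"
    by metis
  have "t \<longlonglongrightarrow> 0"
  proof (rule real_tendsto_sandwich[where f="\<lambda>_. 0" and h="\<lambda>j. 1 / real (Suc j)"])
    show "\<forall>\<^sub>F n in sequentially. 0 \<le> t n" using t by auto
    show "\<forall>\<^sub>F n in sequentially. t n \<le> 1 / real (Suc n)" using t by (simp add: less_imp_le)
    show "(\<lambda>_. 0::real) \<longlonglongrightarrow> 0" by simp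
    show "(\<lambda>j. 1 / real (Suc j)) \<longlonglongrightarrow> 0" using LIMSEQ_inverse_real_of_nat
      by (simp add: inverse_eq_divide)
  qed
  moreover have "\<forall>j. t j \<ge> 0" using t by simp
  ultimately have "(\<lambda>j. G (t j)) \<longlonglongrightarrow> 0" using assms(1)[unfolded property_G_def, rule_format, of t] by blast
  then have "\<forall>\<^sub>F j in sequentially. dist (G (t j)) 0 < \<delta>" using assms(2) tendstoD by blast
  then obtain j where "dist (G (t j)) 0 < \<delta>" unfolding eventually_sequentially by blast
  with t[of j] show False by simp
qed

theorem lemma4p2:
  fixes x :: "nat \<Rightarrow> 'a::metric_space"
    and F :: "'a set"
    and G H :: "real \<Rightarrow> real"
  assumes "F \<noteq> {}"
    and "nonneg_map G" and "nonneg_map H"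
    and "property_G G" and "property_H H"
    and "GH_fejer_monotone G H F x"
  shows "(\<forall>xh. xh \<in> F \<and> xh \<in> closure (range x) \<longrightarrow> x \<longlonglongrightarrow> xh)
         \<and> (bounded_preimage_prop H \<longrightarrow> bounded (range x))"
proof safe
  fix xh assume xF: "xh \<in> F" and xc: "xh \<in> closure (range x)"
  have fej: "\<And>n m. H (dist (x (n + m)) xh) \<le> G (dist (x n) xh)"
    using assms(6) xF unfolding GH_fejer_monotone_def by blast
  have "(\<lambda>m. H (dist (x m) xh)) \<longlonglongrightarrow> 0"
  proof (rule tendstoI)
    fix \<delta> :: real assume d: "\<delta> > 0"
    obtain \<eta> where eta: "\<eta> > 0" "\<And>t. 0 \<le> t \<and> t < \<eta> \<Longrightarrow> \<bar>G t\<bar> < \<delta>"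
      using G_small[OF assms(4) d] by blast
    obtain y where "y \<in> range x" "dist y xh < \<eta>"
      using xc eta(1) by (metis closure_approachable)
    then obtain n where n: "dist (x n) xh < \<eta>" by auto
    have "\<forall>m\<ge>n. dist (H (dist (x m) xh)) 0 < \<delta>"
    proof safe
      fix m assume "n \<le> m"
      then obtain k where "m = n + k" using le_Suc_ex by blast
      hence "H (dist (x m) xh) \<le> G (dist (x n) xh)" using fej by simp
      moreover have "H (dist (x m) xh) \<ge> 0" using assms(3) unfolding nonneg_map_def by simp
      moreover have "\<bar>G (dist (x n) xh)\<bar> < \<delta>" using eta(2) n by simp
      ultimately show "dist (H (dist (x m) xh)) 0 < \<delta>" by simp
    qed
    thus "\<forall>\<^sub>F m in sequentially. dist (H (dist (x m) xh)) 0 < \<delta>"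
      using eventually_sequentially by blast
  qed
  hence "(\<lambda>m. dist (x m) xh) \<longlonglongrightarrow> 0" using assms(5) unfolding property_H_def by simp
  thus "x \<longlonglongrightarrow> xh" using tendsto_dist_iff by blast
next
  assume bp: "bounded_preimage_prop H"
  obtain p where p: "p \<in> F" using assms(1) by blast
  have fej: "\<And>m. H (dist (x m) p) \<le> G (dist (x 0) p)"
    using assms(6) p unfolding GH_fejer_monotone_def by (metis add_0)
  have "bounded (range (\<lambda>m. H (dist (x m) p)))"
  proof (rule boundedI)
    fix y assume "y \<in> range (\<lambda>m. H (dist (x m) p))"
    then obtain m where "y = H (dist (x m) p)" by auto
    moreover have "H (dist (x m) p) \<ge> 0" using assms(3) unfolding nonneg_map_def by simp
    ultimately show "norm y \<le> G (dist (x 0) p)" using fej[of m] by simp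
  qed
  hence "bounded (range (\<lambda>m. dist (x m) p))" using bp unfolding bounded_preimage_prop_def by simp
  then obtain B where B: "\<And>m. norm (dist (x m) p) \<le> B" unfolding bounded_iff by blast
  show "bounded (range x)" unfolding bounded_def
    by (rule exI[of _ p], rule exI[of _ B]) (use B in \<open>auto simp: dist_commute\<close>)
qed

end
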